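(* Let $1/2<c<1$ be a constant, let $r,s$ be positive integers with $s\le cr$, let $0<\delta<1$, and let $t=O\left(\frac{r\log(n/r)+\log(1/\delta)}{\log(1/c)}\right)$ (for a suitable absolute constant in the $O$). Consider a random $t\times n$ $0$-$1$ matrix $M$ whose entries are independent with $M_{i,j}=1$ with probability $1/r$. Then, with probability at least $1-\delta$, $M$ is an $(r,s)$-restricted weight one $t\times n$-matrix. In particular, there exists an $(r,s)$-restricted weight one $t\times n$-matrix with $t=O\left(\frac{r\log(n/r)}{\log(1/c)}\right)$.
   Context: An $(r,s)$-restricted weight one $t\times n$-matrix is a $t\times n$ matrix $M$ with entries in $\{0,1\}$ such that for every $r$ distinct columns $j_1,\dots,j_r\in[n]$ there are $s$ rows $i_1,\dots,i_s\in[t]$ for which the vectors $(M_{i_k,j_1},\dots,M_{i_k,j_r})$, $k=1,\dots,s$, are $s$ distinct vectors of Hamming weight one. Logarithms are base 2. *)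

theory Defs
  imports "HOL-Probability.Probability"
begin

definition restricted_weight_one ::
  "nat \<Rightarrow> nat \<Rightarrow> nat \<Rightarrow> nat \<Rightarrow> (nat \<Rightarrow> nat \<Rightarrow> nat) \<Rightarrow> bool" where
  "restricted_weight_one r s t n M \<longleftrightarrow>
     (\<forall>i<t. \<forall>j<n. M i j \<in> {0, 1}) \<and>
     (\<forall>J. J \<subseteq> {..<n} \<and> card J = r \<longrightarrow>
        (\<exists>I. I \<subseteq> {..<t} \<and> card I = s \<and>
             (\<forall>i\<in>I. card {j\<in>J. M i j = 1} = 1) \<and>
             inj_on (\<lambda>i. restrict (M i) J) I))"

definition random_matrix :: "nat \<Rightarrow> nat \<Rightarrow> nat \<Rightarrow> (nat \<times> nat \<Rightarrow> bool) pmf" where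
  "random_matrix r t n = Pi_pmf ({..<t} \<times> {..<n}) False (\<lambda>_. bernoulli_pmf (1 / real r))"

definition to_matrix :: "(nat \<times> nat \<Rightarrow> bool) \<Rightarrow> nat \<Rightarrow> nat \<Rightarrow> nat" where
  "to_matrix f = (\<lambda>i j. of_bool (f (i, j)))"

end

theory Submission
  imports Defs
begin


lemma Pi_pmf_rows:
  fixes P :: "(nat \<Rightarrow> bool) \<Rightarrow> bool" and q :: "bool pmf"
  shows "measure_pmf.prob (Pi_pmf ({..<t}\<times>{..<n}) False (\<lambda>_. q)) {f. \<forall>i<t. P (\<lambda>j. f(i,j))}
       = measure_pmf.prob (Pi_pmf {..<n} False (\<lambda>_. q)) {x. P x} ^ t"
proof (induction t)
  case 0
  then show ?case by simp
next
  case (Suc t)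
  define A0 where "A0 = Pi_pmf ({t}\<times>{..<n}) False (\<lambda>_. q)"
  define B0 where "B0 = Pi_pmf ({..<t}\<times>{..<n}) False (\<lambda>_. q)"
  define R where "R = Pi_pmf {..<n} False (\<lambda>_. q)"
  define X where "X = {f. P (\<lambda>j. f(t,j))}"
  define Y where "Y = {f. \<forall>i<t. P (\<lambda>j. f(i,j))}"
  have un: "{..<Suc t}\<times>{..<n} = ({t}\<times>{..<n}) \<union> ({..<t}\<times>{..<n})" by auto
  have eq: "Pi_pmf ({..<Suc t}\<times>{..<n}) False (\<lambda>_. q) =
     map_pmf (\<lambda>(f,g) x. if x \<in> {t}\<times>{..<n} then f x else g x) (pair_pmf A0 B0)"
    unfolding un A0_def B0_def by (rule Pi_pmf_union) auto
  have pre: "(\<lambda>(f,g) x. if x \<in> {t}\<times>{..<n} then f x else g x) -` {f. \<forall>i<Suc t. P (\<lambda>j. f(i,j))}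
     \<inter> (set_pmf A0 \<times> set_pmf B0) = (X \<inter> set_pmf A0) \<times> (Y \<inter> set_pmf B0)"
  proof -
    have sA: "set_pmf A0 \<subseteq> {f. \<forall>x. x \<notin> {t}\<times>{..<n} \<longrightarrow> f x = False}"
      unfolding A0_def by (rule set_Pi_pmf_subset) auto
    have sB: "set_pmf B0 \<subseteq> {f. \<forall>x. x \<notin> {..<t}\<times>{..<n} \<longrightarrow> f x = False}"
      unfolding B0_def by (rule set_Pi_pmf_subset) auto
    have r1: "(\<lambda>j. (j < n \<longrightarrow> f (t,j)) \<and> (\<not> j < n \<longrightarrow> g (t,j))) = (\<lambda>j. f (t,j))"
      if "g \<in> set_pmf B0" "f \<in> set_pmf A0" for f g
      using sA sB that by (auto intro!: ext)
    have r2: "(\<lambda>j. (if (i,j) \<in> {t}\<times>{..<n} then f (i,j) else g (i,j))) = (\<lambda>j. g (i,j))"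
      if "i < t" for f g i
      using that by (auto intro!: ext)
    show ?thesis
      unfolding X_def Y_def using r1 r2
      by (auto simp: less_Suc_eq simp del: Pi_pmf_union)
  qed
  have fin: "finite (set_pmf A0)" "finite (set_pmf B0)"
    unfolding A0_def B0_def
    by (auto intro!: finite_subset[OF set_Pi_pmf_subset'] finite_PiE_dflt)
  have "measure_pmf.prob (Pi_pmf ({..<Suc t}\<times>{..<n}) False (\<lambda>_. q)) {f. \<forall>i<Suc t. P (\<lambda>j. f(i,j))}
      = measure_pmf.prob (pair_pmf A0 B0) ((\<lambda>(f,g) x. if x \<in> {t}\<times>{..<n} then f x else g x) -` {f. \<forall>i<Suc t. P (\<lambda>j. f(i,j))})"
    unfolding eq by simp
  also have "\<dots> = measure_pmf.prob (pair_pmf A0 B0) ((X \<inter> set_pmf A0) \<times> (Y \<inter> set_pmf B0))"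
    by (subst measure_Int_set_pmf[symmetric]) (simp only: set_pair_pmf pre)
  also have "\<dots> = measure_pmf.prob A0 (X \<inter> set_pmf A0) * measure_pmf.prob B0 (Y \<inter> set_pmf B0)"
    by (rule measure_pmf_prob_product) (use fin in \<open>auto intro: countable_finite\<close>)
  also have "\<dots> = measure_pmf.prob A0 X * measure_pmf.prob B0 Y"
    by (simp add: measure_Int_set_pmf)
  also have "measure_pmf.prob B0 Y = measure_pmf.prob R {x. P x} ^ t"
    using Suc unfolding B0_def Y_def R_def by simp
  also have "measure_pmf.prob A0 X = measure_pmf.prob R {x. P x}"
  proof -
    have "R = map_pmf (\<lambda>g. g \<circ> (\<lambda>j. (t,j))) A0"
      unfolding R_def A0_def
      by (rule Pi_pmf_bij_betw) (auto simp: bij_betw_def inj_on_def)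
    then have "measure_pmf.prob R {x. P x} = measure_pmf.prob A0 ((\<lambda>g. g \<circ> (\<lambda>j. (t,j))) -` {x. P x})"
      by simp
    also have "(\<lambda>g. g \<circ> (\<lambda>j. (t,j))) -` {x. P x} = X"
      unfolding X_def by (auto simp: o_def)
    finally show ?thesis by simp
  qed
  finally show ?case unfolding R_def by simp
qed

lemma row_single:
  fixes r n j :: nat and J :: "nat set"
  assumes J: "J \<subseteq> {..<n}" "j \<in> J" "card J = r" and r: "r > 0"
  shows "measure_pmf.prob (Pi_pmf {..<n} False (\<lambda>_. bernoulli_pmf (1/real r)))
           {x. {j'\<in>J. x j'} = {j}} = (1/real r) * (1 - 1/real r)^(r-1)"
proof -
  define B where "B = (\<lambda>j'. if j' = j then {True} else if j' \<in> J then {False} else (UNIV::bool set))"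
  have set: "{x. {j'\<in>J. x j'} = {j}} = Pi {..<n} B"
    using J unfolding B_def by (auto simp: Pi_def)
  have p1: "0 \<le> 1/real r" "1/real r \<le> 1" using r by auto
  have pb: "measure_pmf.prob (bernoulli_pmf (1/real r)) (B x) =
      (if x = j then 1/real r else if x \<in> J then 1 - 1/real r else 1)" for x
    using p1 unfolding B_def by (auto simp: measure_pmf_single)
  have fin: "finite J" using J finite_subset by auto
  have "(\<Prod>x\<in>{..<n}. measure_pmf.prob (bernoulli_pmf (1/real r)) (B x))
        = (\<Prod>x\<in>J. measure_pmf.prob (bernoulli_pmf (1/real r)) (B x))"
    using J pb by (intro prod.mono_neutral_right) auto
  also have "\<dots> = (1/real r) * (\<Prod>x\<in>J-{j}. measure_pmf.prob (bernoulli_pmf (1/real r)) (B x))"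
    using fin J pb by (simp add: prod.remove)
  also have "(\<Prod>x\<in>J-{j}. measure_pmf.prob (bernoulli_pmf (1/real r)) (B x)) = (\<Prod>x\<in>J-{j}. 1 - 1/real r)"
    by (rule prod.cong) (auto simp: pb)
  also have "\<dots> = (1 - 1/real r)^(r-1)"
    using J fin by simp
  finally show ?thesis unfolding set by (simp add: measure_Pi_pmf_Pi)
qed

lemma row_good:
  fixes r n :: nat and J S :: "nat set"
  assumes J: "J \<subseteq> {..<n}" "card J = r" and r: "r > 0"
  shows "measure_pmf.prob (Pi_pmf {..<n} False (\<lambda>_. bernoulli_pmf (1/real r)))
           {x. \<exists>j\<in>J-S. {j'\<in>J. x j'} = {j}} = real (card (J-S)) * ((1/real r) * (1 - 1/real r)^(r-1))"
proof -
  have fin: "finite J" using J finite_subset by auto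
  have eq: "{x. \<exists>j\<in>J-S. {j'\<in>J. x j'} = {j}} = (\<Union>j\<in>J-S. {x. {j'\<in>J. x j'} = {j}})" by auto
  have "measure_pmf.prob (Pi_pmf {..<n} False (\<lambda>_. bernoulli_pmf (1/real r))) (\<Union>j\<in>J-S. {x. {j'\<in>J. x j'} = {j}})
    = (\<Sum>j\<in>J-S. measure_pmf.prob (Pi_pmf {..<n} False (\<lambda>_. bernoulli_pmf (1/real r))) {x. {j'\<in>J. x j'} = {j}})"
    by (rule measure_pmf.finite_measure_finite_Union) (use fin in \<open>auto simp: disjoint_family_on_def\<close>)
  also have "\<dots> = (\<Sum>j\<in>J-S. (1/real r) * (1 - 1/real r)^(r-1))"
    by (rule sum.cong) (use J r row_single in auto)
  finally show ?thesis unfolding eq by simp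
qed

lemma pow_bound: "(1 - 1/real r)^(r-1) \<ge> exp (-1)"
proof (cases "r \<le> 1")
  case True
  then have "r = 0 \<or> r = 1" by auto
  then show ?thesis by auto
next
  case False
  define m where "m = r - 1"
  have m: "m > 0" "real r = real m + 1" using False unfolding m_def by auto
  have "(1 + 1 / real m)^m \<le> exp 1"
    using exp_ge_one_plus_x_over_n_power_n[of m 1] m by simp
  moreover have "1 - 1/real r = 1 / (1 + 1/real m)"
    using m by (simp add: field_simps)
  ultimately have "(1 - 1/real r)^(r-1) = 1 / (1 + 1/real m)^m" unfolding m_def
    by (simp add: power_divide)
  also have "\<dots> \<ge> 1 / exp 1"
    using \<open>(1 + 1 / real m)^m \<le> exp 1\<close> m by (intro divide_left_mono mult_pos_pos zero_less_power) (auto intro: add_pos_nonneg)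
  finally show ?thesis by (simp add: exp_minus field_simps)
qed

lemma comb_aux:
  fixes f :: "nat \<times> nat \<Rightarrow> bool" and J :: "nat set"
  defines "W \<equiv> (\<lambda>i. {j'\<in>J. f(i,j')})"
  assumes H: "\<forall>S. S \<subseteq> J \<and> card S < s \<longrightarrow> (\<exists>i<t. \<exists>j\<in>J-S. W i = {j})"
  shows "k \<le> s \<Longrightarrow> \<exists>I. I \<subseteq> {..<t} \<and> card I = k \<and> (\<forall>i\<in>I. \<exists>j\<in>J. W i = {j}) \<and> inj_on W I"
proof (induction k)
  case 0
  show ?case by (rule exI[of _ "{}"]) auto
next
  case (Suc k)
  then obtain I where I: "I \<subseteq> {..<t}" "card I = k" "\<forall>i\<in>I. \<exists>j\<in>J. W i = {j}" "inj_on W I"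
    by auto
  have finI: "finite I" using I(1) finite_subset by blast
  define S where "S = \<Union>(W ` I)"
  have SJ: "S \<subseteq> J" unfolding S_def W_def by auto
  have "card S \<le> (\<Sum>i\<in>I. card (W i))" unfolding S_def using finI by (rule card_UN_le)
  also have "\<dots> = (\<Sum>i\<in>I. 1)" using I(3) by (intro sum.cong) auto
  finally have "card S < s" using I(2) Suc.prems by simp
  then obtain i j where ij: "i < t" "j \<in> J - S" "W i = {j}" using H SJ by blast
  have iI: "i \<notin> I" using ij unfolding S_def by auto
  have WI: "W i \<notin> W ` I" using ij unfolding S_def by auto
  show ?case
    by (rule exI[of _ "insert i I"]) (use I ij iI WI finI in auto)
qed

lemma comb:
  fixes f :: "nat \<times> nat \<Rightarrow> bool" and J :: "nat set"
  assumes H: "\<forall>S. S \<subseteq> J \<and> card S < s \<longrightarrow> (\<exists>i<t. \<exists>j\<in>J-S. {j'\<in>J. f(i,j')} = {j})"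
  shows "\<exists>I. I \<subseteq> {..<t} \<and> card I = s \<and> (\<forall>i\<in>I. card {j\<in>J. to_matrix f i j = 1} = 1) \<and>
             inj_on (\<lambda>i. restrict (to_matrix f i) J) I"
proof -
  obtain I where I: "I \<subseteq> {..<t}" "card I = s" "\<forall>i\<in>I. \<exists>j\<in>J. {j'\<in>J. f(i,j')} = {j}"
     "inj_on (\<lambda>i. {j'\<in>J. f(i,j')}) I"
    using comb_aux[OF H, of s] by auto
  have e: "{j\<in>J. to_matrix f i j = 1} = {j'\<in>J. f(i,j')}" for i
    unfolding to_matrix_def by auto
  have "inj_on ((\<lambda>g. {j\<in>J. g j = 1}) \<circ> (\<lambda>i. restrict (to_matrix f i) J)) I"
  proof -
    have "(\<lambda>g. {j\<in>J. g j = 1}) \<circ> (\<lambda>i. restrict (to_matrix f i) J) = (\<lambda>i. {j'\<in>J. f(i,j')})"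
      by (auto simp: to_matrix_def fun_eq_iff)
    then show ?thesis using I(4) by simp
  qed
  then have "inj_on (\<lambda>i. restrict (to_matrix f i) J) I" by (rule inj_on_imageI2)
  then show ?thesis using I e by (intro exI[of _ I]) auto
qed



lemma exp_term_bound:
  fixes x :: real assumes "0 \<le> x"
  shows "x ^ k / fact k \<le> exp x"
proof -
  have "(\<Sum>i\<in>{k}. x ^ i /\<^sub>R fact i) \<le> (\<Sum>i. x ^ i /\<^sub>R fact i)"
    using assms by (intro sum_le_suminf summable_exp_generic) auto
  then show ?thesis by (simp add: exp_def divide_inverse_commute scaleR_conv_of_real)
qed

lemma choose_bound:
  assumes "0 < r" "r \<le> n"
  shows "real (n choose r) \<le> (exp 1 * real n / real r) ^ r"
proof -
  have "fact r * fact (n - r) * (n choose r) = fact n" by (rule binomial_fact_lemma) fact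
  then have "fact r * (n choose r) = fact n div fact (n - r)" by (metis fact_nonzero nonzero_mult_div_cancel_right mult.commute mult.assoc)
  also have "\<dots> \<le> n ^ r" by (rule fact_div_fact_le_pow) fact
  finally have a: "real (fact r) * real (n choose r) \<le> real n ^ r"
    by (metis of_nat_le_iff of_nat_mult of_nat_power)
  have b: "real r ^ r / fact r \<le> exp (real r)" by (rule exp_term_bound) auto
  have fpos: "(0::real) < fact r" by simp
  have "real (n choose r) \<le> real n ^ r / fact r" using a fpos by (simp add: field_simps)
  also have "\<dots> = (real n / real r) ^ r * (real r ^ r / fact r)"
    using assms by (simp add: power_divide field_simps)
  also have "\<dots> \<le> (real n / real r) ^ r * exp (real r)"
    using b by (intro mult_left_mono) auto
  also have "exp (real r) = exp 1 ^ r" by (simp add: exp_of_nat_mult[symmetric])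
  also have "(real n / real r) ^ r * exp 1 ^ r = (exp 1 * real n / real r) ^ r"
    by (simp add: power_mult_distrib[symmetric] ac_simps)
  finally show ?thesis .
qed

lemma fail_bound:
  fixes c :: real and r s t n :: nat
  assumes r: "0 < r" and sc: "real s \<le> c * real r" and c1: "c < 1" and c0: "0 < c"
  shows "measure_pmf.prob (random_matrix r t n) {f. \<not> restricted_weight_one r s t n (to_matrix f)}
         \<le> real (n choose r) * 2^r * (1 - (1-c)/exp 1)^t"
proof -
  define M where "M = random_matrix r t n"
  define R where "R = Pi_pmf {..<n} False (\<lambda>_. bernoulli_pmf (1/real r))"
  define good where "good = (\<lambda>(J::nat set) S (x::nat\<Rightarrow>bool). \<exists>j\<in>J-S. {j'\<in>J. x j'} = {j})"
  define JJ where "JJ = {J. J \<subseteq> {..<n} \<and> card J = r}"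
  define Idx where "Idx = Sigma JJ (\<lambda>J. {S. S \<subseteq> J \<and> card S < s})"
  define E where "E = (\<lambda>(J,S). {f::nat\<times>nat\<Rightarrow>bool. \<forall>i<t. \<not> good J S (\<lambda>j. f(i,j))})"
  have finJJ: "finite JJ" unfolding JJ_def
    by (rule finite_subset[of _ "Pow {..<n}"]) auto
  have finS: "finite {S. S \<subseteq> J \<and> card S < s}" if "J \<in> JJ" for J
  proof -
    have "finite J" using that unfolding JJ_def using finite_subset[of J "{..<n}"] by auto
    show ?thesis by (rule finite_subset[of _ "Pow J"]) (auto simp: \<open>finite J\<close>)
  qed
  have finIdx: "finite Idx" unfolding Idx_def using finJJ finS
    by (intro finite_SigmaI) auto
  have sub: "{f. \<not> restricted_weight_one r s t n (to_matrix f)} \<subseteq> (\<Union>p\<in>Idx. E p)"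
  proof
    fix f assume "f \<in> {f. \<not> restricted_weight_one r s t n (to_matrix f)}"
    then have nf: "\<not> restricted_weight_one r s t n (to_matrix f)" by simp
    have ent: "\<forall>i<t. \<forall>j<n. to_matrix f i j \<in> {0, 1}" by (simp add: to_matrix_def)
    obtain J where J: "J \<subseteq> {..<n}" "card J = r" and
      nI: "\<not> (\<exists>I. I \<subseteq> {..<t} \<and> card I = s \<and> (\<forall>i\<in>I. card {j\<in>J. to_matrix f i j = 1} = 1) \<and>
             inj_on (\<lambda>i. restrict (to_matrix f i) J) I)"
      using nf ent unfolding restricted_weight_one_def by blast
    then obtain S where S: "S \<subseteq> J" "card S < s" "\<not> (\<exists>i<t. \<exists>j\<in>J-S. {j'\<in>J. f(i,j')} = {j})"
      using comb[of J s t f] by blast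
    then have "(J,S) \<in> Idx" "f \<in> E (J,S)" using J unfolding Idx_def JJ_def E_def good_def by auto
    then show "f \<in> (\<Union>p\<in>Idx. E p)" by blast
  qed
  define B where "B = (1 - (1-c)/exp 1)^t"
  have eachB: "measure_pmf.prob M (E p) \<le> B" if p: "p \<in> Idx" for p
  proof -
    obtain J S where pJS: "p = (J,S)" by (cases p)
    have J: "J \<subseteq> {..<n}" "card J = r" and S: "S \<subseteq> J" "card S < s"
      using p unfolding pJS Idx_def JJ_def by auto
    have finJ: "finite J" using J(1) finite_subset[OF _ finite_lessThan] by blast
    have "measure_pmf.prob M (E p) = measure_pmf.prob R {x. \<not> good J S x} ^ t"
      unfolding M_def random_matrix_def pJS E_def R_def
      using Pi_pmf_rows[where P="\<lambda>x. \<not> good J S x"] by simp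
    also have "measure_pmf.prob R {x. \<not> good J S x} = 1 - measure_pmf.prob R {x. good J S x}"
    proof -
      have "{x. \<not> good J S x} = UNIV - {x. good J S x}" by auto
      then show ?thesis using measure_pmf.prob_compl[of "{x. good J S x}" R] by simp
    qed
    also have "measure_pmf.prob R {x. good J S x} = real (card (J-S)) * ((1/real r) * (1 - 1/real r)^(r-1))"
      unfolding R_def good_def using row_good[OF J r, of S] by simp
    also have "\<dots> \<ge> (1-c) / exp 1"
    proof -
      have cd: "card (J-S) = r - card S" using card_Diff_subset[OF finite_subset[OF S(1) finJ] S(1)] J by simp
      have "card S + 1 \<le> s" using S by simp
      then have "real (card S) + 1 \<le> real s" by linarith
      have "card S \<le> r" using S J finJ card_mono by metis
      then have "real (card (J-S)) = real r - real (card S)" using cd by simp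
      also have "\<dots> \<ge> (1-c) * real r" using sc \<open>real (card S) + 1 \<le> real s\<close> by (simp add: algebra_simps)
      finally have a: "real (card (J-S)) / real r \<ge> 1 - c" using r by (simp add: field_simps)
      have "(1-c) / exp 1 = (1 - c) * exp (-1)" by (simp add: exp_minus field_simps)
      also have "\<dots> \<le> (real (card (J-S)) / real r) * (1 - 1/real r)^(r-1)"
        using a pow_bound[of r] c1 by (intro mult_mono) auto
      finally show ?thesis by simp
    qed
    then have "1 - real (card (J-S)) * ((1/real r) * (1 - 1/real r)^(r-1)) \<le> 1 - (1-c)/exp 1" by simp
    note low = this
    have X1: "real (card (J-S)) * ((1/real r) * (1 - 1/real r)^(r-1)) \<le> 1"
      using row_good[OF J r, of S] measure_pmf.prob_le_1[of R "{x. good J S x}"]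
      unfolding R_def good_def by simp
    have "(1 - real (card (J-S)) * ((1/real r) * (1 - 1/real r)^(r-1)))^t \<le> (1 - (1-c)/exp 1)^t"
      using low X1 by (intro power_mono) auto
    finally show ?thesis unfolding B_def .
  qed
  have cardI: "card Idx \<le> (n choose r) * 2^r"
  proof -
    have "card Idx = (\<Sum>J\<in>JJ. card {S. S \<subseteq> J \<and> card S < s})"
      unfolding Idx_def using finJJ
      using finS by (intro card_SigmaI) auto
    also have "\<dots> \<le> (\<Sum>J\<in>JJ. 2^r)"
    proof (intro sum_mono)
      fix J assume "J \<in> JJ"
      then have J: "J \<subseteq> {..<n}" "card J = r" unfolding JJ_def by auto
      then have "finite J" using finite_subset[OF _ finite_lessThan] by blast
      then have "card {S. S \<subseteq> J \<and> card S < s} \<le> card (Pow J)"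
        by (intro card_mono) auto
      then show "card {S. S \<subseteq> J \<and> card S < s} \<le> 2^r" using J \<open>finite J\<close> by (simp add: card_Pow)
    qed
    also have "\<dots> = card JJ * 2^r" by simp
    also have "card JJ = n choose r" unfolding JJ_def using n_subsets[of "{..<n}" r] by simp
    finally show ?thesis .
  qed
  have fin2: "real (card Idx) * B \<le> real ((n choose r) * 2^r) * B"
    proof -
    have "(1-c)/exp 1 \<le> 1" using c0 c1 exp_ge_add_one_self[of 1] by (simp add: field_simps)
    then have "B \<ge> 0" unfolding B_def by simp
    moreover have "real (card Idx) \<le> real ((n choose r) * 2^r)" using cardI by (simp only: of_nat_le_iff)
    ultimately show ?thesis by (intro mult_right_mono)
  qed
  have "measure_pmf.prob M {f. \<not> restricted_weight_one r s t n (to_matrix f)} \<le> measure_pmf.prob M (\<Union>p\<in>Idx. E p)"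
    using sub by (intro measure_pmf.finite_measure_mono) auto
  also have "\<dots> \<le> (\<Sum>p\<in>Idx. measure_pmf.prob M (E p))"
    using finIdx by (intro measure_pmf.finite_measure_subadditive_finite) auto
  also have "\<dots> \<le> real (card Idx) * B"
    using eachB by (intro sum_bounded_above) auto
  also note fin2
  finally show ?thesis unfolding M_def B_def by simp
qed

lemma ln2_bounds: "1/2 \<le> ln (2::real)" "ln (2::real) \<le> 1"
proof -
  have "ln (1/2::real) \<le> 1/2 - 1" by (rule ln_le_minus_one) auto
  then show "1/2 \<le> ln (2::real)" by (simp add: ln_div)
  show "ln (2::real) \<le> 1" using ln_le_minus_one[of "2::real"] by simp
qed

lemma analytic:
  fixes c \<delta> :: real and r n t :: nat
  assumes c: "1/2 < c" "c < 1" and r: "0 < r" and n: "2*r \<le> n" and d: "0 < \<delta>" "\<delta> < 1"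
    and t: "real t \<ge> 36 * (real r * log 2 (real n / real r) + log 2 (1/\<delta>)) / log 2 (1/c)"
  shows "real (n choose r) * 2^r * (1 - (1-c)/exp 1)^t \<le> \<delta>"
proof -
  define y where "y = real n / real r"
  define x where "x = log 2 y"
  define L where "L = log 2 (1/\<delta>)"
  define l where "l = log 2 (1/c)"
  have y2: "y \<ge> 2" unfolding y_def using n r by (simp add: field_simps)
  have x1: "x \<ge> 1" unfolding x_def using y2 by simp
  have L0: "L > 0" unfolding L_def using d by simp
  have l0: "l > 0" unfolding l_def using c by simp
  have ln2: "1/2 \<le> ln (2::real)" "ln (2::real) \<le> 1" by (rule ln2_bounds)+
  have "ln (1/c) \<le> 1/c - 1" using c by (intro ln_le_minus_one) auto
  also have "1/c - 1 \<le> 2 * (1 - c)"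
  proof -
    have h: "0 \<le> (2*c-1)*(1-c)" using c by simp
    have "1/c - 1 = (1-c)/c" using c by (simp add: field_simps)
    also have "\<dots> \<le> 2 * (1-c)"
    proof -
      have "1 - c \<le> 2*(1-c)*c" using h by (simp add: algebra_simps)
      then show ?thesis using c by (simp add: pos_divide_le_eq)
    qed
    finally show ?thesis .
  qed
  finally have "ln (1/c) \<le> 2 * (1-c)" .
  then have "ln (1/c) / ln 2 \<le> 2 * (1-c) / ln 2" using ln2 by (intro divide_right_mono) auto
  also have "2 * (1-c) / ln 2 \<le> 2 * (1-c) / (1/2)" using ln2 c by (intro divide_left_mono) auto
  finally have l4: "l \<le> 4 * (1 - c)" unfolding l_def log_def by simp
  have tl: "real t * l \<ge> 36 * (real r * x + L)"
    using t l0 unfolding x_def L_def l_def y_def by (simp add: field_simps)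
  have key: "real r * ln (2 * exp 1 * y) + L * ln 2 \<le> real t * (1 - c) / exp 1"
  proof -
    have "ln (2 * exp 1 * y) = ln 2 + 1 + x * ln 2"
      unfolding x_def log_def using y2 by (simp add: ln_mult)
    also have "\<dots> \<le> 3 * x"
    proof -
      have "x * ln 2 \<le> x * 1" using ln2 x1 by (intro mult_left_mono) auto
      then show ?thesis using ln2 x1 by linarith
    qed
    finally have a0: "ln (2 * exp 1 * y) \<le> 3 * x" .
    have a: "real r * ln (2 * exp 1 * y) \<le> 3 * (real r * x)"
      using mult_left_mono[OF a0, of "real r"] by simp
    have b: "L * ln 2 \<le> L" using L0 ln2 by (simp add: mult_left_le)
    have "36 * (real r * x + L) \<le> real t * (4 * (1 - c))"
      using tl mult_left_mono[OF l4, of "real t"] by simp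
    then have "9 * (real r * x + L) \<le> real t * (1 - c)" by (simp add: algebra_simps)
    moreover have "3 * exp 1 \<le> (9::real)" using exp_le by simp
    moreover have "0 \<le> real r * x + L" using r x1 L0 by simp
    ultimately have "3 * (real r * x + L) * exp 1 \<le> real t * (1 - c)"
      using mult_left_mono[of "3 * exp 1" 9 "real r * x + L"] by (simp add: algebra_simps)
    then have "3 * (real r * x + L) \<le> real t * (1 - c) / exp 1" by (simp add: field_simps)
    then show ?thesis using a b L0 by (simp only: distrib_left)
  qed
  have q0: "0 \<le> 1 - (1-c)/exp 1" using c exp_ge_add_one_self[of 1] by (simp add: field_simps)
  have "(1 - (1-c)/exp 1)^t \<le> exp (-((1-c)/exp 1))^t"
  proof (rule power_mono[OF _ q0])
    show "1 - (1 - c) / exp 1 \<le> exp (-((1 - c) / exp 1))"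
      using exp_ge_add_one_self[of "-((1-c)/exp 1)"] by linarith
  qed
  also have "\<dots> = exp (- (real t * (1-c)/exp 1))" by (simp add: exp_of_nat_mult[symmetric])
  finally have qb: "(1 - (1-c)/exp 1)^t \<le> exp (- (real t * (1-c)/exp 1))" .
  have cb: "real (n choose r) * 2^r \<le> exp (real r * ln (2 * exp 1 * y))"
  proof -
    have "real (n choose r) \<le> (exp 1 * real n / real r) ^ r" using choose_bound[of r n] r n by simp
    then have "real (n choose r) * 2^r \<le> (exp 1 * real n / real r) ^ r * 2^r" by simp
    also have "\<dots> = (2 * exp 1 * y) ^ r" unfolding y_def by (simp add: power_mult_distrib[symmetric] ac_simps)
    also have "\<dots> = exp (real r * ln (2 * exp 1 * y))" using y2
      by (subst exp_of_nat_mult) simp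
    finally show ?thesis .
  qed
  have "real (n choose r) * 2^r * (1 - (1-c)/exp 1)^t \<le> exp (real r * ln (2 * exp 1 * y)) * exp (- (real t * (1-c)/exp 1))"
    using cb qb q0 by (intro mult_mono) auto
  also have "\<dots> = exp (real r * ln (2 * exp 1 * y) - real t * (1-c)/exp 1)" by (simp only: exp_diff exp_minus divide_inverse)
  also have "\<dots> \<le> exp (- (L * ln 2))" using key by simp
  also have "exp (- (L * ln 2)) = \<delta>" unfolding L_def log_def using d by (simp add: ln_div)
  finally show ?thesis .
qed

lemma part1:
  fixes c \<delta> :: real and r s n t :: nat
  assumes c: "1/2 < c" "c < 1" and r: "0 < r" and sc: "real s \<le> c * real r" and n: "2*r \<le> n"
    and d: "0 < \<delta>" "\<delta> < 1"
    and t: "real t \<ge> 36 * (real r * log 2 (real n / real r) + log 2 (1/\<delta>)) / log 2 (1/c)"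
  shows "measure_pmf.prob (random_matrix r t n) {f. restricted_weight_one r s t n (to_matrix f)} \<ge> 1 - \<delta>"
proof -
  have fb: "measure_pmf.prob (random_matrix r t n) {f. \<not> restricted_weight_one r s t n (to_matrix f)} \<le> \<delta>"
    using order_trans[OF fail_bound[OF r sc c(2)] analytic[OF c r n d t]] c by simp
  have "{f. \<not> restricted_weight_one r s t n (to_matrix f)} = UNIV - {f. restricted_weight_one r s t n (to_matrix f)}"
    by auto
  then have "measure_pmf.prob (random_matrix r t n) {f. \<not> restricted_weight_one r s t n (to_matrix f)}
      = 1 - measure_pmf.prob (random_matrix r t n) {f. restricted_weight_one r s t n (to_matrix f)}"
    using measure_pmf.prob_compl[of "{f. restricted_weight_one r s t n (to_matrix f)}" "random_matrix r t n"] by simp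
  then show ?thesis using fb by simp
qed

theorem lemma7:
  shows "(\<exists>C>0. \<forall>(c::real) (r::nat) (s::nat) (n::nat) (\<delta>::real) (t::nat).
            1/2 < c \<and> c < 1 \<and> 0 < r \<and> 0 < s \<and> real s \<le> c * real r \<and>
            2 * r \<le> n \<and> 0 < \<delta> \<and> \<delta> < 1 \<and>
            real t \<ge> C * (real r * log 2 (real n / real r) + log 2 (1 / \<delta>)) / log 2 (1 / c)
            \<longrightarrow> measure_pmf.prob (random_matrix r t n)
                  {f. restricted_weight_one r s t n (to_matrix f)} \<ge> 1 - \<delta>)
       \<and> (\<exists>C>0. \<forall>(c::real) (r::nat) (s::nat) (n::nat).
            1/2 < c \<and> c < 1 \<and> 0 < r \<and> 0 < s \<and> real s \<le> c * real r \<and> 2 * r \<le> n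
            \<longrightarrow> (\<exists>t M. real t \<le> C * (real r * log 2 (real n / real r)) / log 2 (1 / c) \<and>
                       restricted_weight_one r s t n M))"
proof (intro conjI)
  show "\<exists>C>0. \<forall>(c::real) (r::nat) (s::nat) (n::nat) (\<delta>::real) (t::nat).
            1/2 < c \<and> c < 1 \<and> 0 < r \<and> 0 < s \<and> real s \<le> c * real r \<and>
            2 * r \<le> n \<and> 0 < \<delta> \<and> \<delta> < 1 \<and>
            real t \<ge> C * (real r * log 2 (real n / real r) + log 2 (1 / \<delta>)) / log 2 (1 / c)
            \<longrightarrow> measure_pmf.prob (random_matrix r t n)
                  {f. restricted_weight_one r s t n (to_matrix f)} \<ge> 1 - \<delta>"
  proof (rule exI[of _ 36], intro conjI allI impI)
    fix c \<delta> :: real and r s n t :: nat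
    assume H: "1/2 < c \<and> c < 1 \<and> 0 < r \<and> 0 < s \<and> real s \<le> c * real r \<and>
            2 * r \<le> n \<and> 0 < \<delta> \<and> \<delta> < 1 \<and>
            real t \<ge> 36 * (real r * log 2 (real n / real r) + log 2 (1 / \<delta>)) / log 2 (1 / c)"
    show "measure_pmf.prob (random_matrix r t n)
                  {f. restricted_weight_one r s t n (to_matrix f)} \<ge> 1 - \<delta>"
      using H by (intro part1[where c=c and \<delta>=\<delta> and r=r and s=s and n=n and t=t]) simp_all
  qed simp
  show "\<exists>C>0. \<forall>(c::real) (r::nat) (s::nat) (n::nat).
            1/2 < c \<and> c < 1 \<and> 0 < r \<and> 0 < s \<and> real s \<le> c * real r \<and> 2 * r \<le> n
            \<longrightarrow> (\<exists>t M. real t \<le> C * (real r * log 2 (real n / real r)) / log 2 (1 / c) \<and>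
                       restricted_weight_one r s t n M)"
  proof (rule exI[of _ 73], intro conjI allI impI)
    fix c :: real and r s n :: nat
    assume H: "1/2 < c \<and> c < 1 \<and> 0 < r \<and> 0 < s \<and> real s \<le> c * real r \<and> 2 * r \<le> n"
    then have c: "1/2 < c" "c < 1" and r: "0 < r" and sc: "real s \<le> c * real r" and n: "2*r \<le> n"
      by auto
    define x where "x = log 2 (real n / real r)"
    define l where "l = log 2 (1/c)"
    have x1: "x \<ge> 1" unfolding x_def using n r by (simp add: field_simps)
    have r1: "1 \<le> real r" using r by simp
    have rx: "real r * x \<ge> 1" using mult_mono[OF r1 x1] by simp
    have l0: "0 < l" unfolding l_def using c by simp
    have l1: "l \<le> 1"
    proof -
      have "1/c \<le> 2" using c by (simp add: field_simps)
      then have "log 2 (1/c) \<le> log 2 2" using c by (subst log_le_cancel_iff) auto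
      then show ?thesis unfolding l_def by simp
    qed
    define z where "z = 36 * (real r * x + 1) / l"
    have z0: "0 \<le> z" unfolding z_def using rx l0 by simp
    define t where "t = nat \<lceil>z\<rceil>"
    have tz: "real t \<ge> z" unfolding t_def using z0 by (simp add: le_nat_iff ceiling_le_iff)
    have tz2: "real t \<le> z + 1" unfolding t_def using z0 of_int_ceiling_le_add_one[of z] by simp
    have d: "0 < (1/2::real)" "(1/2::real) < 1" by auto
    have "real t \<ge> 36 * (real r * log 2 (real n / real r) + log 2 (1/(1/2::real))) / log 2 (1/c)"
      using tz unfolding z_def x_def l_def by simp
    from part1[OF c r sc n d this]
    have "measure_pmf.prob (random_matrix r t n) {f. restricted_weight_one r s t n (to_matrix f)} \<ge> 1/2"
      by simp
    then have "{f. restricted_weight_one r s t n (to_matrix f)} \<noteq> {}"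
    proof (intro notI)
      assume "1/2 \<le> measure_pmf.prob (random_matrix r t n) {f. restricted_weight_one r s t n (to_matrix f)}"
        and "{f. restricted_weight_one r s t n (to_matrix f)} = {}"
      then show False by simp
    qed
    then obtain f where f: "restricted_weight_one r s t n (to_matrix f)" by auto
    have "z + 1 \<le> 73 * (real r * x) / l"
    proof -
      have "36 * (real r * x + 1) + l \<le> 73 * (real r * x)" using rx l1 by (simp add: algebra_simps)
      then have "(36 * (real r * x + 1) + l) / l \<le> 73 * (real r * x) / l"
        using l0 by (intro divide_right_mono) auto
      moreover have "(36 * (real r * x + 1) + l) / l = z + 1" unfolding z_def using l0
        by (simp add: field_simps)
      ultimately show ?thesis by simp
    qed
    then have "real t \<le> 73 * (real r * log 2 (real n / real r)) / log 2 (1 / c)"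
      using tz2 unfolding x_def l_def by simp
    then show "\<exists>t M. real t \<le> 73 * (real r * log 2 (real n / real r)) / log 2 (1 / c) \<and>
                       restricted_weight_one r s t n M" using f by blast
  qed simp
qed

end
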